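(* For every $n\ge3$, there is no oriented Cayley graph for the symmetric group $S_n$, and none for the alternating group $A_n$, on which the continuous quantum walk admits uniform mixing at any time.
   Context: An oriented Cayley graph $X(G,C)$ for a finite group $G$ has $1\notin C$, $C\cap C^{-1}=\emptyset$, and skew-symmetric adjacency matrix $A=\sum_{g\in C}(A_g-A_g^T)$, where $A_g$ is the permutation matrix with $(A_g)_{a,b}=1$ iff $ba^{-1}=g$. The walk has transition matrix $U(t)=\exp(-tA)$, and uniform mixing at time $t$ means all entries of $U(t)$ have the same modulus. *)

theory Defs
  imports Complex_Main "HOL-Algebra.Sym_Groups"
begin

definition oriented_cayley :: "('a, 'b) monoid_scheme \<Rightarrow> 'a set \<Rightarrow> bool" where
  "oriented_cayley G C \<longleftrightarrow> C \<subseteq> carrier G \<and> \<one>\<^bsub>G\<^esub> \<notin> C \<and>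
     (\<forall>g\<in>C. inv\<^bsub>G\<^esub> g \<notin> C)"

definition perm_mat :: "('a, 'b) monoid_scheme \<Rightarrow> 'a \<Rightarrow> 'a \<Rightarrow> 'a \<Rightarrow> real" where
  "perm_mat G g a b = (if b \<otimes>\<^bsub>G\<^esub> inv\<^bsub>G\<^esub> a = g then 1 else 0)"

definition cayley_adj :: "('a, 'b) monoid_scheme \<Rightarrow> 'a set \<Rightarrow> 'a \<Rightarrow> 'a \<Rightarrow> real" where
  "cayley_adj G C a b = (\<Sum>g\<in>C. perm_mat G g a b - perm_mat G g b a)"

fun mat_pow :: "'a set \<Rightarrow> ('a \<Rightarrow> 'a \<Rightarrow> real) \<Rightarrow> nat \<Rightarrow> 'a \<Rightarrow> 'a \<Rightarrow> real" where
  "mat_pow S M 0 a b = (if a = b then 1 else 0)"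
| "mat_pow S M (Suc k) a b = (\<Sum>c\<in>S. M a c * mat_pow S M k c b)"

definition mat_exp :: "'a set \<Rightarrow> ('a \<Rightarrow> 'a \<Rightarrow> real) \<Rightarrow> 'a \<Rightarrow> 'a \<Rightarrow> real" where
  "mat_exp S M a b = (\<Sum>k. mat_pow S M k a b / fact k)"

definition transition :: "('a, 'b) monoid_scheme \<Rightarrow> 'a set \<Rightarrow> real \<Rightarrow> 'a \<Rightarrow> 'a \<Rightarrow> real" where
  "transition G C t = mat_exp (carrier G) (\<lambda>a b. - t * cayley_adj G C a b)"

definition uniform_mixing :: "('a, 'b) monoid_scheme \<Rightarrow> 'a set \<Rightarrow> real \<Rightarrow> bool" where
  "uniform_mixing G C t \<longleftrightarrow>
     (\<forall>a\<in>carrier G. \<forall>b\<in>carrier G. \<forall>c\<in>carrier G. \<forall>d\<in>carrier G.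
        \<bar>transition G C t a b\<bar> = \<bar>transition G C t c d\<bar>)"

end

theory Submission
  imports Defs "HOL-Computational_Algebra.Primes" "HOL-Library.Discrete_Functions"
begin


lemma mp_bound:
  assumes fin: "finite S" and M: "\<And>a b. \<bar>X a b\<bar> \<le> M"
  shows "\<bar>mat_pow S X k a b\<bar> \<le> (real (card S) * M) ^ k"
proof (induction k arbitrary: a b)
  case 0 then show ?case by simp
next
  case (Suc k)
  have "\<bar>mat_pow S X (Suc k) a b\<bar> \<le> (\<Sum>c\<in>S. \<bar>X a c * mat_pow S X k c b\<bar>)"
    by (simp add: sum_abs)
  also have "\<dots> \<le> (\<Sum>c\<in>S. M * (real (card S) * M) ^ k)"
    by (rule sum_mono) (simp add: abs_mult; rule mult_mono; simp add: M Suc.IH order_trans[OF abs_ge_zero M])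
  also have "\<dots> = (real (card S) * M) ^ Suc k" by simp
  finally show ?case .
qed

lemma mp_summable:
  assumes fin: "finite S" and M: "\<And>a b. \<bar>X a b\<bar> \<le> M"
  shows "summable (\<lambda>k. norm (mat_pow S X k a b / fact k))"
proof (rule summable_comparison_test'[where N=0])
  show "summable (\<lambda>n. inverse (fact n) * (real (card S) * M) ^ n)" by (rule summable_exp)
  fix n :: nat
  have "\<bar>mat_pow S X n a b\<bar> / fact n \<le> (real (card S) * M) ^ n / fact n"
    by (rule divide_right_mono[OF mp_bound[OF fin M]]) simp
  moreover have "norm (norm (mat_pow S X n a b / fact n)) = \<bar>mat_pow S X n a b\<bar> / fact n" by simp
  moreover have "inverse (fact n) * (real (card S) * M) ^ n = (real (card S) * M) ^ n / fact n"
    by (simp add: divide_inverse mult.commute)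
  ultimately show "norm (norm (mat_pow S X n a b / fact n)) \<le> inverse (fact n) * (real (card S) * M) ^ n"
    by linarith
qed

lemma mp_summable':
  assumes fin: "finite S" and M: "\<And>a b. \<bar>X a b\<bar> \<le> M"
  shows "summable (\<lambda>k. mat_pow S X k a b / fact k)"
  by (rule summable_norm_cancel[OF mp_summable[OF fin M]])

lemma delta_l: "finite S \<Longrightarrow> a \<in> S \<Longrightarrow> (\<Sum>c\<in>S. (if a = c then 1 else 0) * f c) = (f a::real)"
proof -
  assume "finite S" "a \<in> S"
  have "(\<Sum>c\<in>S. (if a = c then 1 else 0) * f c) = (\<Sum>c\<in>S. if a = c then f c else 0)"
    by (rule sum.cong) auto
  thus ?thesis using \<open>finite S\<close> \<open>a \<in> S\<close> by simp
qed

lemma delta_r: "finite S \<Longrightarrow> b \<in> S \<Longrightarrow> (\<Sum>c\<in>S. f c * (if c = b then 1 else 0)) = (f b::real)"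
proof -
  assume "finite S" "b \<in> S"
  have "(\<Sum>c\<in>S. f c * (if c = b then 1 else 0)) = (\<Sum>c\<in>S. if b = c then f c else 0)"
    by (rule sum.cong) auto
  thus ?thesis using \<open>finite S\<close> \<open>b \<in> S\<close> by simp
qed

lemma mp_add:
  assumes fin: "finite S" and "a \<in> S" "b \<in> S"
  shows "(\<Sum>c\<in>S. mat_pow S X i a c * mat_pow S X j c b) = mat_pow S X (i + j) a b"
  using assms(2)
proof (induction i arbitrary: a)
  case 0 then show ?case using delta_l[OF fin] by simp
next
  case (Suc i)
  have "(\<Sum>c\<in>S. mat_pow S X (Suc i) a c * mat_pow S X j c b)
      = (\<Sum>c\<in>S. \<Sum>d\<in>S. X a d * mat_pow S X i d c * mat_pow S X j c b)"
    by (simp add: sum_distrib_right)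
  also have "\<dots> = (\<Sum>d\<in>S. \<Sum>c\<in>S. X a d * (mat_pow S X i d c * mat_pow S X j c b))"
    by (subst sum.swap) (simp add: mult.assoc)
  also have "\<dots> = (\<Sum>d\<in>S. X a d * mat_pow S X (i + j) d b)"
    by (rule sum.cong) (auto simp: sum_distrib_left[symmetric] Suc.IH)
  finally show ?case by simp
qed

lemma mp_right:
  assumes fin: "finite S" and "a \<in> S" "b \<in> S"
  shows "mat_pow S X (Suc k) a b = (\<Sum>c\<in>S. mat_pow S X k a c * X c b)"
proof -
  have "mat_pow S X (k + 1) a b = (\<Sum>c\<in>S. mat_pow S X k a c * mat_pow S X 1 c b)"
    by (rule mp_add[OF assms, symmetric])
  also have "\<dots> = (\<Sum>c\<in>S. mat_pow S X k a c * X c b)"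
    using assms(3) by (intro sum.cong refl) (simp only: One_nat_def mat_pow.simps delta_r[OF fin])
  finally show ?thesis by simp
qed

lemma mp_skew:
  assumes fin: "finite S" and sk: "\<And>a b. a \<in> S \<Longrightarrow> b \<in> S \<Longrightarrow> X b a = - X a b"
    and "a \<in> S" "b \<in> S"
  shows "mat_pow S X k b a = (-1) ^ k * mat_pow S X k a b"
  using assms(3,4)
proof (induction k arbitrary: a b)
  case 0 then show ?case by auto
next
  case (Suc k)
  have "mat_pow S X (Suc k) b a = (\<Sum>c\<in>S. X b c * mat_pow S X k c a)" by simp
  also have "\<dots> = (\<Sum>c\<in>S. (-1) ^ Suc k * (mat_pow S X k a c * X c b))"
  proof (rule sum.cong[OF refl])
    fix c assume c: "c \<in> S"
    have "X b c = - X c b" using sk[OF c Suc.prems(2)] .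
    moreover have "mat_pow S X k c a = (-1)^k * mat_pow S X k a c" using Suc.IH[OF Suc.prems(1) c] .
    ultimately show "X b c * mat_pow S X k c a = (-1) ^ Suc k * (mat_pow S X k a c * X c b)" by simp
  qed
  also have "\<dots> = (-1) ^ Suc k * mat_pow S X (Suc k) a b"
    using mp_right[OF fin Suc.prems] by (simp add: sum_distrib_left)
  finally show ?case .
qed

lemma mp_rowsum:
  assumes rs: "\<And>a. a \<in> S \<Longrightarrow> (\<Sum>b\<in>S. X a b) = 0" and fin: "finite S" and "a \<in> S"
  shows "(\<Sum>b\<in>S. mat_pow S X k a b) = (if k = 0 then 1 else 0)"
  using assms(3)
proof (induction k arbitrary: a)
  case 0 then show ?case using fin by simp
next
  case (Suc k)
  have "(\<Sum>b\<in>S. mat_pow S X (Suc k) a b) = (\<Sum>c\<in>S. X a c * (\<Sum>b\<in>S. mat_pow S X k c b))"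
    by (simp add: sum_distrib_left) (rule sum.swap)
  also have "\<dots> = (\<Sum>c\<in>S. X a c * (if k = 0 then 1 else 0))"
    using Suc.IH by (intro sum.cong) auto
  also have "\<dots> = 0" using rs[OF Suc.prems] by (simp add: sum_distrib_right[symmetric])
  finally show ?case by simp
qed

lemma alt_binom_sum:
  "(\<Sum>i\<le>m. (-1::real) ^ (m - i) / (fact i * fact (m - i))) = (if m = 0 then 1 else 0)"
proof -
  have "(\<Sum>i\<le>m. (-1::real) ^ (m - i) / (fact i * fact (m - i)))
      = (\<Sum>i\<le>m. of_nat (m choose i) * 1 ^ i * (-1) ^ (m - i)) / fact m"
    by (simp add: sum_divide_distrib binomial_fact)
  also have "\<dots> = (1 + (-1::real)) ^ m / fact m" by (simp only: binomial_ring)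
  finally show ?thesis by simp
qed

lemma exp_props:
  assumes fin: "finite S" and M: "\<And>a b. \<bar>X a b\<bar> \<le> M"
    and sk: "\<And>a b. a \<in> S \<Longrightarrow> b \<in> S \<Longrightarrow> X b a = - X a b"
    and rs: "\<And>a. a \<in> S \<Longrightarrow> (\<Sum>b\<in>S. X a b) = 0"
    and a: "a \<in> S"
  shows "(\<Sum>b\<in>S. mat_exp S X a b) = 1" "(\<Sum>b\<in>S. (mat_exp S X a b)^2) = 1"
proof -
  have sm: "\<And>a b. summable (\<lambda>k. mat_pow S X k a b / fact k)" using mp_summable'[OF fin M] .
  have "(\<Sum>b\<in>S. mat_exp S X a b) = (\<Sum>k. \<Sum>b\<in>S. mat_pow S X k a b / fact k)"
    unfolding mat_exp_def by (rule suminf_sum[symmetric]) (rule sm)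
  also have "\<dots> = (\<Sum>k. if k = 0 then 1 else 0)"
    by (rule arg_cong[where f=suminf], rule ext) (simp add: sum_divide_distrib[symmetric] mp_rowsum[OF rs fin a])
  also have "\<dots> = 1" using sums_single[of 0 "\<lambda>_. 1::real"] by (simp add: sums_iff)
  finally show "(\<Sum>b\<in>S. mat_exp S X a b) = 1" .
  define A where "A c k = mat_pow S X k a c / fact k" for c k
  define B where "B c k = (-1) ^ k * mat_pow S X k c a / fact k" for c k
  have sA: "summable (\<lambda>k. norm (A c k))" for c unfolding A_def using mp_summable[OF fin M] .
  have sB: "summable (\<lambda>k. norm (B c k))" for c
  proof -
    have "summable (\<lambda>k. norm (mat_pow S X k c a / fact k))" by (rule mp_summable[OF fin M])
    thus ?thesis unfolding B_def by (simp add: abs_mult)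
  qed
  have B_eq: "suminf (B c) = mat_exp S X a c" if c: "c \<in> S" for c
    unfolding B_def mat_exp_def using mp_skew[OF fin sk c a] by (simp add: power_mult_distrib[symmetric])
  have "(\<Sum>c\<in>S. (mat_exp S X a c)^2) = (\<Sum>c\<in>S. suminf (A c) * suminf (B c))"
    by (rule sum.cong) (auto simp: B_eq power2_eq_square A_def[abs_def] mat_exp_def)
  also have "\<dots> = (\<Sum>c\<in>S. \<Sum>m. \<Sum>i\<le>m. A c i * B c (m - i))"
    by (intro sum.cong refl Cauchy_product sA sB)
  also have "\<dots> = (\<Sum>m. \<Sum>c\<in>S. \<Sum>i\<le>m. A c i * B c (m - i))"
    by (rule suminf_sum[symmetric]) (intro summable_Cauchy_product sA sB)
  also have "\<dots> = (\<Sum>m. if m = 0 then 1 else 0)"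
  proof (rule arg_cong[where f=suminf], rule ext)
    fix m
    have "(\<Sum>c\<in>S. \<Sum>i\<le>m. A c i * B c (m - i))
        = (\<Sum>i\<le>m. (-1) ^ (m - i) / (fact i * fact (m - i)) *
              (\<Sum>c\<in>S. mat_pow S X i a c * mat_pow S X (m - i) c a))"
      unfolding A_def B_def by (subst sum.swap) (simp add: sum_distrib_left mult_ac)
    also have "\<dots> = (\<Sum>i\<le>m. (-1) ^ (m - i) / (fact i * fact (m - i))) * mat_pow S X m a a"
      using a by (simp add: mp_add[OF fin] sum_distrib_right)
    also have "\<dots> = (if m = 0 then 1 else 0)"
      using a by (simp add: alt_binom_sum)
    finally show "(\<Sum>c\<in>S. \<Sum>i\<le>m. A c i * B c (m - i)) = (if m = 0 then 1 else 0)" .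
  qed
  also have "\<dots> = 1" using sums_single[of 0 "\<lambda>_. 1::real"] by (simp add: sums_iff)
  finally show "(\<Sum>b\<in>S. (mat_exp S X a b)^2) = 1" .
qed



lemma pm_row:
  assumes G: "group G" and a: "a \<in> carrier G" and g: "g \<in> carrier G" and fin: "finite (carrier G)"
  shows "(\<Sum>b\<in>carrier G. perm_mat G g a b) = 1" "(\<Sum>b\<in>carrier G. perm_mat G g b a) = 1"
proof -
  have "(\<Sum>b\<in>carrier G. perm_mat G g a b) = (\<Sum>b\<in>carrier G. if b = g \<otimes>\<^bsub>G\<^esub> a then 1 else 0)"
    unfolding perm_mat_def by (rule sum.cong[OF refl]) (simp add: group.inv_solve_right'[OF G _ _ a] g)
  also have "\<dots> = 1" using fin monoid.m_closed[OF group.is_monoid[OF G] g a] by (simp add: sum.delta')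
  finally show "(\<Sum>b\<in>carrier G. perm_mat G g a b) = 1" .
  have ig: "inv\<^bsub>G\<^esub> g \<in> carrier G" using G g by simp
  have "(\<Sum>b\<in>carrier G. perm_mat G g b a) = (\<Sum>b\<in>carrier G. if b = inv\<^bsub>G\<^esub> g \<otimes>\<^bsub>G\<^esub> a then 1 else 0)"
    unfolding perm_mat_def
  proof (rule sum.cong[OF refl])
    fix b assume b: "b \<in> carrier G"
    have "(a \<otimes>\<^bsub>G\<^esub> inv\<^bsub>G\<^esub> b = g) = (a = g \<otimes>\<^bsub>G\<^esub> b)" by (rule group.inv_solve_right'[OF G g a b])
    also have "\<dots> = (inv\<^bsub>G\<^esub> g \<otimes>\<^bsub>G\<^esub> a = b)" by (rule group.inv_solve_left'[OF G b g a, symmetric])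
    finally show "(if a \<otimes>\<^bsub>G\<^esub> inv\<^bsub>G\<^esub> b = g then 1 else 0) = (if b = inv\<^bsub>G\<^esub> g \<otimes>\<^bsub>G\<^esub> a then 1 else 0)"
      by auto
  qed
  also have "\<dots> = 1" using fin monoid.m_closed[OF group.is_monoid[OF G] ig a] by (simp add: sum.delta')
  finally show "(\<Sum>b\<in>carrier G. perm_mat G g b a) = 1" .
qed

lemma adj_row:
  assumes G: "group G" and a: "a \<in> carrier G" and fin: "finite (carrier G)"
    and C: "C \<subseteq> carrier G"
  shows "(\<Sum>b\<in>carrier G. cayley_adj G C a b) = 0"
proof -
  have "(\<Sum>b\<in>carrier G. cayley_adj G C a b) =
        (\<Sum>g\<in>C. (\<Sum>b\<in>carrier G. perm_mat G g a b) - (\<Sum>b\<in>carrier G. perm_mat G g b a))"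
    unfolding cayley_adj_def by (subst sum.swap) (simp add: sum_subtractf)
  also have "\<dots> = 0" using C pm_row[OF G a _ fin] by (intro sum.neutral) auto
  finally show ?thesis .
qed

lemma adj_skew: "cayley_adj G C b a = - cayley_adj G C a b"
  unfolding cayley_adj_def by (simp add: sum_negf[symmetric])

lemma adj_bound: "\<bar>cayley_adj G C a b\<bar> \<le> real (card C)"
proof -
  have "\<bar>cayley_adj G C a b\<bar> \<le> (\<Sum>g\<in>C. \<bar>perm_mat G g a b - perm_mat G g b a\<bar>)"
    unfolding cayley_adj_def by (rule sum_abs)
  also have "\<dots> \<le> (\<Sum>g\<in>C. 1)" by (rule sum_mono) (simp add: perm_mat_def)
  finally show ?thesis by simp
qed

lemma mixing_square:
  assumes G: "group G" and fin: "finite (carrier G)" and oc: "oriented_cayley G C"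
    and um: "uniform_mixing G C t"
  shows "\<exists>k::nat. card (carrier G) = k^2"
proof -
  let ?S = "carrier G"
  define X where "X a b = - t * cayley_adj G C a b" for a b
  define U where "U = transition G C t"
  have U_def': "U = mat_exp ?S X" unfolding U_def transition_def X_def by simp
  have C: "C \<subseteq> ?S" using oc unfolding oriented_cayley_def by auto
  have M: "\<bar>X a b\<bar> \<le> \<bar>t\<bar> * real (card C)" for a b
    unfolding X_def abs_mult abs_minus_cancel by (rule mult_left_mono[OF adj_bound abs_ge_zero])
  have sk: "X b a = - X a b" if "a \<in> ?S" "b \<in> ?S" for a b unfolding X_def adj_skew[of G C b a] by simp
  have rs: "(\<Sum>b\<in>?S. X a b) = 0" if "a \<in> ?S" for a
    unfolding X_def using adj_row[OF G that fin C] by (simp add: sum_negf sum_distrib_left[symmetric])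
  define a0 where "a0 = \<one>\<^bsub>G\<^esub>"
  have a0: "a0 \<in> ?S" unfolding a0_def by (rule monoid.one_closed[OF group.is_monoid[OF G]])
  have s1: "(\<Sum>b\<in>?S. U a0 b) = 1" and s2: "(\<Sum>b\<in>?S. (U a0 b)^2) = 1"
    unfolding U_def' using exp_props[OF fin M sk rs a0] by auto
  define d where "d = \<bar>U a0 a0\<bar>"
  have dU: "\<bar>U a0 b\<bar> = d" if "b \<in> ?S" for b
    using um a0 that unfolding uniform_mixing_def d_def U_def by blast
  have "(\<Sum>b\<in>?S. (U a0 b)^2) = (\<Sum>b\<in>?S. d^2)"
    by (rule sum.cong[OF refl]) (metis dU power2_abs)
  hence e2: "real (card ?S) * d^2 = 1" using s2 by simp
  define P where "P = ?S \<inter> {b. U a0 b \<ge> 0}"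
  define Q where "Q = ?S \<inter> - {b. U a0 b \<ge> 0}"
  have "(\<Sum>b\<in>?S. U a0 b) = (\<Sum>b\<in>?S. if U a0 b \<ge> 0 then d else - d)"
  proof (rule sum.cong[OF refl])
    fix b assume b: "b \<in> ?S"
    show "U a0 b = (if U a0 b \<ge> 0 then d else - d)" using dU[OF b] by (auto simp: abs_if)
  qed
  also have "\<dots> = real (card P) * d - real (card Q) * d"
    unfolding P_def Q_def by (simp add: sum.If_cases[OF fin])
  finally have e1: "(real (card P) - real (card Q)) * d = 1" using s1 by (simp add: algebra_simps)
  have eN: "real (card ?S) = real (card P) + real (card Q)"
    unfolding P_def Q_def using card_Int_Diff[OF fin, of "{b. 0 \<le> U a0 b}"] by (simp add: Diff_eq)
  have "real (card ?S) = (real (card P) - real (card Q))^2"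
  proof -
    have "real (card ?S) = real (card ?S) * ((real (card P) - real (card Q)) * d)^2" using e1 by simp
    also have "\<dots> = (real (card ?S) * d^2) * (real (card P) - real (card Q))^2"
      by (simp add: power_mult_distrib)
    also have "\<dots> = (real (card P) - real (card Q))^2" using e2 by simp
    finally show ?thesis .
  qed
  hence "card ?S = (nat \<bar>int (card P) - int (card Q)\<bar>)^2"
  proof -
    assume h: "real (card ?S) = (real (card P) - real (card Q))^2"
    define z where "z = int (card P) - int (card Q)"
    have "real ((nat \<bar>z\<bar>)^2) = (real_of_int \<bar>z\<bar>)^2" by simp
    also have "\<dots> = (real_of_int z)^2" by simp
    also have "\<dots> = (real (card P) - real (card Q))^2" unfolding z_def by simp
    finally have "real (card ?S) = real ((nat \<bar>z\<bar>)^2)" using h by simp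
    thus ?thesis unfolding z_def using of_nat_eq_iff by blast
  qed
  thus ?thesis by blast
qed



lemma legendre:
  fixes p m K :: nat
  assumes p: "prime p"
  shows "m < p^(K+1) \<Longrightarrow> multiplicity p (fact m) = (\<Sum>i\<in>{1..K}. m div p^i)"
proof (induction m)
  case 0 thus ?case by simp
next
  case (Suc m)
  have IH: "multiplicity p (fact m) = (\<Sum>i\<in>{1..K}. m div p^i)" using Suc by simp
  have pe: "prime_elem p" using p by (rule prime_imp_prime_elem)
  have p1: "1 < p" using p by (rule prime_gt_1_nat)
  have nu: "\<not> is_unit p" using p1 by simp
  define v where "v = multiplicity p (Suc m)"
  have m1: "multiplicity p (fact (Suc m)) = v + multiplicity p (fact m)"
    unfolding v_def fact_Suc of_nat_id
    by (rule prime_elem_multiplicity_mult_distrib[OF pe]) auto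
  have "p ^ v \<le> Suc m" unfolding v_def by (rule dvd_imp_le[OF multiplicity_dvd]) simp
  hence "p ^ v < p ^ (K+1)" using Suc.prems by linarith
  hence "v < K + 1" by (rule power_less_imp_less_exp[OF p1])
  hence vK: "v \<le> K" by simp
  have set: "{i\<in>{1..K}. p^i dvd Suc m} = {1..v}"
  proof -
    have pv: "p^i dvd Suc m \<longleftrightarrow> i \<le> v" for i
      unfolding v_def by (rule power_dvd_iff_le_multiplicity[OF _ nu]) simp
    show ?thesis using vK by (auto simp: pv)
  qed
  have "(\<Sum>i\<in>{1..K}. Suc m div p^i) = (\<Sum>i\<in>{1..K}. m div p^i + (if p^i dvd Suc m then 1 else 0))"
    by (rule sum.cong[OF refl]) (simp add: div_Suc; metis dvd_eq_mod_eq_0 neq0_conv)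
  also have "\<dots> = (\<Sum>i\<in>{1..K}. m div p^i) + (\<Sum>i\<in>{1..K}. if p^i dvd Suc m then 1 else 0)"
    by (rule sum.distrib)
  also have "(\<Sum>i\<in>{1..K}. if p^i dvd Suc m then 1 else 0) = (\<Sum>i\<in>{i\<in>{1..K}. p^i dvd Suc m}. 1::nat)"
    by (rule sum.inter_filter[symmetric]) simp
  also have "\<dots> = v" unfolding set by simp
  finally show ?case using m1 IH by simp
qed

lemma mult_binom:
  fixes p n K :: nat
  assumes p: "prime p" and b: "2*n < p^(K+1)"
  shows "multiplicity p ((2*n) choose n) + 2 * (\<Sum>i\<in>{1..K}. n div p^i) = (\<Sum>i\<in>{1..K}. (2*n) div p^i)"
proof -
  have pe: "prime_elem p" using p by (rule prime_imp_prime_elem)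
  have f: "fact n * fact n * ((2*n) choose n) = fact (2*n)"
    using binomial_fact_lemma[of n "2*n"] by simp
  have "multiplicity p (fact (2*n)) = multiplicity p (fact n * fact n) + multiplicity p ((2*n) choose n)"
    unfolding f[symmetric] by (rule prime_elem_multiplicity_mult_distrib[OF pe]) auto
  also have "multiplicity p (fact n * fact n) = 2 * multiplicity p (fact n)"
    by (subst prime_elem_multiplicity_mult_distrib[OF pe]) auto
  finally have "multiplicity p (fact (2*n)) = 2 * multiplicity p (fact n) + multiplicity p ((2*n) choose n)" .
  moreover have "multiplicity p (fact (2*n)) = (\<Sum>i\<in>{1..K}. (2*n) div p^i)"
    by (rule legendre[OF p b])
  moreover have "multiplicity p (fact n) = (\<Sum>i\<in>{1..K}. n div p^i)"
    by (rule legendre[OF p]) (use b in linarith)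
  ultimately show ?thesis by simp
qed

lemma div_double_le:
  fixes n d :: nat
  assumes "d > 0"
  shows "(2*n) div d \<le> 2 * (n div d) + 1"
proof -
  have e: "n div d * d + n mod d = n" by (rule div_mult_mod_eq)
  have "n mod d < d" using assms by simp
  moreover have e': "d * (n div d) + n mod d = n" by (rule mult_div_mod_eq)
  ultimately have "n < d * (n div d) + d" by linarith
  hence "n < d * (n div d + 1)" by simp
  hence "2*n < (2 * (n div d) + 2) * d" by (simp add: algebra_simps)
  hence "(2*n) div d < 2 * (n div d) + 2" by (rule less_mult_imp_div_less)
  thus ?thesis by simp
qed

lemma binom_pow_le:
  fixes p n :: nat
  assumes p: "prime p" and n: "n \<ge> 1"
  shows "p ^ multiplicity p ((2*n) choose n) \<le> 2*n"
proof -
  have p1: "1 < p" using p by (rule prime_gt_1_nat)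
  have "2*n < 2^(2*n)" by (rule less_exp)
  also have "\<dots> \<le> 2^(2*n+1)" by simp
  also have "\<dots> \<le> p^(2*n+1)" using p1 by (intro power_mono) auto
  finally have b: "2*n < p^(2*n+1)" .
  define S where "S = {i\<in>{1..2*n}. p^i \<le> 2*n}"
  have "multiplicity p ((2*n) choose n) + 2 * (\<Sum>i\<in>{1..2*n}. n div p^i) = (\<Sum>i\<in>{1..2*n}. (2*n) div p^i)"
    by (rule mult_binom[OF p b])
  also have "\<dots> \<le> (\<Sum>i\<in>{1..2*n}. 2 * (n div p^i) + (if p^i \<le> 2*n then 1 else 0))"
  proof (rule sum_mono)
    fix i assume "i \<in> {1..2*n}"
    show "(2*n) div p^i \<le> 2 * (n div p^i) + (if p^i \<le> 2*n then 1 else 0)"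
    proof (cases "p^i \<le> 2*n")
      case True thus ?thesis using div_double_le[of "p^i" n] p1 by simp
    next
      case False thus ?thesis by simp
    qed
  qed
  also have "\<dots> = 2 * (\<Sum>i\<in>{1..2*n}. n div p^i) + (\<Sum>i\<in>{1..2*n}. if p^i \<le> 2*n then 1 else 0)"
    by (simp add: sum.distrib sum_distrib_left)
  also have "(\<Sum>i\<in>{1..2*n}. if p^i \<le> 2*n then 1 else 0) = card S"
    unfolding S_def by (simp add: sum.inter_filter[symmetric])
  finally have mS: "multiplicity p ((2*n) choose n) \<le> card S" by simp
  have "p ^ card S \<le> 2*n"
  proof (cases "S = {}")
    case True thus ?thesis using n by simp
  next
    case False
    have fS: "finite S" unfolding S_def by simp
    define e where "e = Max S"
    have eS: "e \<in> S" unfolding e_def using False fS by simp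
    have "S \<subseteq> {1..e}" unfolding e_def using fS by (auto simp: S_def)
    hence "card S \<le> e" using card_mono[of "{1..e}" S] by simp
    hence "p ^ card S \<le> p ^ e" using p1 by (intro power_increasing) auto
    also have "\<dots> \<le> 2*n" using eS unfolding S_def by simp
    finally show ?thesis .
  qed
  moreover have "p ^ multiplicity p ((2*n) choose n) \<le> p ^ card S"
    using mS p1 by (intro power_increasing) auto
  ultimately show ?thesis by linarith
qed

lemma binom_no_big:
  fixes p n :: nat
  assumes p: "prime p" and pn: "p \<le> n" and n3: "2*n < 3*p" and sq: "2*n < p^2"
  shows "multiplicity p ((2*n) choose n) = 0"
proof -
  have "multiplicity p ((2*n) choose n) + 2 * (\<Sum>i\<in>{1..1}. n div p^i) = (\<Sum>i\<in>{1..1}. (2*n) div p^i)"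
    by (rule mult_binom[OF p]) (use sq in \<open>simp add: power2_eq_square\<close>)
  moreover have "n div p = 1" by (rule div_nat_eqI) (use pn n3 in auto)
  moreover have "(2*n) div p = 2" by (rule div_nat_eqI) (use pn n3 in auto)
  ultimately show ?thesis by simp
qed

lemma primorial: "\<Prod>{p::nat. prime p \<and> p \<le> m} \<le> 4^m"
proof (induction m rule: less_induct)
  case (less m)
  show ?case
  proof (cases "m \<le> 2")
    case True
    have "{p::nat. prime p \<and> p \<le> m} \<subseteq> {2}"
    proof
      fix p assume "p \<in> {p::nat. prime p \<and> p \<le> m}"
      hence "prime p" "p \<le> m" by auto
      moreover have "p \<ge> 2" using \<open>prime p\<close> by (rule prime_ge_2_nat)
      ultimately show "p \<in> {2}" using True by simp
    qed
    hence "{p::nat. prime p \<and> p \<le> m} = {} \<or> {p::nat. prime p \<and> p \<le> m} = {2}" by blast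
    thus ?thesis
    proof
      assume e: "{p::nat. prime p \<and> p \<le> m} = {}" show ?thesis unfolding e by simp
    next
      assume e: "{p::nat. prime p \<and> p \<le> m} = {2}"
      hence "m \<ge> 2" by auto
      hence "(4::nat)^1 \<le> 4^m" by (intro power_increasing) auto
      thus ?thesis unfolding e by simp
    qed
  next
    case False
    show ?thesis
    proof (cases "even m")
      case True
      have "\<not> prime m" using True False prime_odd_nat[of m] by auto
      have "{p::nat. prime p \<and> p \<le> m} = {p. prime p \<and> p \<le> m - 1}"
      proof (intro equalityI subsetI)
        fix p
        assume "p \<in> {p::nat. prime p \<and> p \<le> m}"
        hence pp: "prime p" "p \<le> m" by auto
        moreover have "p \<noteq> m" using pp(1) \<open>\<not> prime m\<close> by auto
        ultimately show "p \<in> {p. prime p \<and> p \<le> m - 1}" by auto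
      next
        fix p
        assume "p \<in> {p. prime p \<and> p \<le> m - 1}" thus "p \<in> {p::nat. prime p \<and> p \<le> m}" by auto
      qed
      hence "\<Prod>{p::nat. prime p \<and> p \<le> m} \<le> 4^(m-1)" using less.IH[of "m-1"] False by simp
      also have "\<dots> \<le> 4^m" by (intro power_increasing) auto
      finally show ?thesis .
    next
      case odd: False
      then obtain k where mk: "m = 2*k+1" by (metis oddE)
      have k1: "k \<ge> 1" using False mk by simp
      define T where "T = {p::nat. prime p \<and> k+1 < p \<and> p \<le> 2*k+1}"
      have split: "{p::nat. prime p \<and> p \<le> m} = {p. prime p \<and> p \<le> k+1} \<union> T"
        unfolding T_def mk by auto
      have fin1: "finite {p::nat. prime p \<and> p \<le> k+1}" by simp
      have finT: "finite T" unfolding T_def by simp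
      have disj: "{p::nat. prime p \<and> p \<le> k+1} \<inter> T = {}" unfolding T_def by auto
      have P1: "\<Prod>{p::nat. prime p \<and> p \<le> k+1} \<le> 4^(k+1)" using less.IH[of "k+1"] mk k1 by simp
      define C where "C = (2*k+1) choose k"
      have CB: "C \<le> 4^k"
      proof -
        have "C \<le> (\<Sum>j\<le>k. (2*k+1) choose j)" unfolding C_def by (rule member_le_sum) auto
        also have "\<dots> = 2^(2*k)" by (rule binomial_r_part_sum)
        also have "\<dots> = 4^k" by (simp add: power_mult)
        finally show ?thesis .
      qed
      have f: "fact k * fact (k+1) * C = fact (2*k+1)"
        using binomial_fact_lemma[of k "2*k+1"] unfolding C_def by (simp add: ac_simps)
      have Tsub: "T \<subseteq> {1..2*k+1}" unfolding T_def using prime_ge_1_nat by auto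
      have "\<Prod>T dvd \<Prod>{1..2*k+1}"
        by (rule prod_dvd_prod_subset[OF _ Tsub]) simp
      also have "\<Prod>{1..2*k+1} = fact (2*k+1)" by (simp only: fact_prod of_nat_id)
      also have "\<dots> = (fact k * fact (k+1)) * C" by (rule f[symmetric])
      finally have "\<Prod>T dvd (fact k * fact (k+1)) * C" .
      moreover have "coprime (\<Prod>T) (fact k * fact (k+1))"
      proof (rule prod_coprime_left)
        fix p assume "p \<in> T"
        hence pp: "prime p" and pk: "k + 1 < p" unfolding T_def by auto
        have a1: "\<not> p dvd fact k" using pk by (subst prime_dvd_fact_iff[OF pp]) simp
        have a2: "\<not> p dvd fact (k+1)" using pk by (subst prime_dvd_fact_iff[OF pp]) simp
        have "\<not> p dvd fact k * fact (k+1)" using a1 a2 prime_dvd_mult_iff[OF pp] by blast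
        thus "coprime p (fact k * fact (k+1))" by (rule prime_imp_coprime[OF pp])
      qed
      ultimately have "\<Prod>T dvd C" by (simp add: coprime_dvd_mult_right_iff)
      hence "\<Prod>T \<le> C" by (rule dvd_imp_le) (simp add: C_def)
      hence PT: "\<Prod>T \<le> 4^k" using CB by linarith
      have "\<Prod>{p::nat. prime p \<and> p \<le> m} = \<Prod>{p::nat. prime p \<and> p \<le> k+1} * \<Prod>T"
        unfolding split by (rule prod.union_disjoint[OF fin1 finT disj])
      also have "\<dots> \<le> 4^(k+1) * 4^k" by (rule mult_mono[OF P1 PT]) auto
      also have "\<dots> = 4^(k+1+k)" by (rule power_add[symmetric])
      also have "k+1+k = m" using mk by simp
      finally show ?thesis .
    qed
  qed
qed



fun ndiv :: "nat \<Rightarrow> nat \<Rightarrow> bool" where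
  "ndiv p d = (if d < 2 then True else (p mod d \<noteq> 0 \<and> ndiv p (d - 1)))"
declare ndiv.simps[simp del]

lemma ndiv_correct: "ndiv p k \<Longrightarrow> 2 \<le> d \<Longrightarrow> d \<le> k \<Longrightarrow> \<not> d dvd p"
proof (induction p k rule: ndiv.induct)
  case (1 p k)
  show ?case
  proof (cases "d = k")
    case True thus ?thesis using 1(2-) by (subst (asm) ndiv.simps) auto
  next
    case False
    then have "d \<le> k - 1" using 1 by simp
    moreover have "ndiv p (k - 1)" "\<not> k < 2" using 1(2-) by (subst (asm) ndiv.simps; auto)+
    ultimately show ?thesis using 1 by auto
  qed
qed

lemma prime_by_trial:
  fixes p k :: nat
  assumes "1 < p" "ndiv p k" "p < (k+1)^2"
  shows "prime p"
proof (rule ccontr)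
  assume np: "\<not> prime p"
  then obtain a where a: "a dvd p" "a \<noteq> 1" "a \<noteq> p" using assms(1) prime_nat_iff by auto
  then obtain b where b: "p = a * b" by (auto simp: dvd_def)
  have "a > 1" using a assms(1) b by (cases "a = 0") auto
  have "b > 1" using a b assms(1) by (cases "b = 0"; cases "b = 1") auto
  show False
  proof (cases "a \<le> b")
    case True
    have "a * a \<le> p" using b True by simp
    hence "a * a < (k+1) * (k+1)" using assms(3) by (simp add: power2_eq_square)
    hence "a \<le> k" using mult_le_mono[of "k+1" a "k+1" a] by (metis not_less_eq_eq not_le Suc_eq_plus1)
    thus False using ndiv_correct[OF assms(2)] a(1) \<open>a > 1\<close> by auto
  next
    case False
    have "b * b \<le> p" using b False by simp
    hence "b * b < (k+1) * (k+1)" using assms(3) by (simp add: power2_eq_square)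
    hence "b \<le> k" using mult_le_mono[of "k+1" b "k+1" b] by (metis not_less_eq_eq not_le Suc_eq_plus1)
    moreover have "b dvd p" using b by simp
    ultimately show False using ndiv_correct[OF assms(2)] \<open>b > 1\<close> by auto
  qed
qed

lemma bertrand_small:
  fixes n :: nat
  assumes "1 \<le> n" "n < 1259"
  shows "\<exists>p. prime p \<and> n < p \<and> p \<le> 2*n"
proof -
  have step: "\<And>q a. prime q \<Longrightarrow> q \<le> 2*a \<Longrightarrow> a \<le> n \<Longrightarrow> n < q \<Longrightarrow> \<exists>p. prime p \<and> n < p \<and> p \<le> 2*n"
    by (metis le_trans mult_le_mono2)
  have p2: "prime (2::nat)" by simp
  have p3: "prime (3::nat)" by (rule prime_by_trial[where k=2]) (simp_all add: ndiv.simps)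
  have p5: "prime (5::nat)" by (rule prime_by_trial[where k=2]) (simp_all add: ndiv.simps)
  have p7: "prime (7::nat)" by (rule prime_by_trial[where k=2]) (simp_all add: ndiv.simps)
  have p13: "prime (13::nat)" by (rule prime_by_trial[where k=3]) (simp_all add: ndiv.simps)
  have p23: "prime (23::nat)" by (rule prime_by_trial[where k=4]) (simp_all add: ndiv.simps)
  have p43: "prime (43::nat)" by (rule prime_by_trial[where k=6]) (simp_all add: ndiv.simps)
  have p83: "prime (83::nat)" by (rule prime_by_trial[where k=9]) (simp_all add: ndiv.simps)
  have p163: "prime (163::nat)" by (rule prime_by_trial[where k=12]) (simp_all add: ndiv.simps)
  have p317: "prime (317::nat)" by (rule prime_by_trial[where k=17]) (simp_all add: ndiv.simps)
  have p631: "prime (631::nat)" by (rule prime_by_trial[where k=25]) (simp_all add: ndiv.simps)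
  have p1259: "prime (1259::nat)" by (rule prime_by_trial[where k=35]) (simp_all add: ndiv.simps)
  show ?thesis
  proof -
    consider "n < 2" | "2 \<le> n \<and> n < 3" | "3 \<le> n \<and> n < 5" | "5 \<le> n \<and> n < 7" | "7 \<le> n \<and> n < 13"
      | "13 \<le> n \<and> n < 23" | "23 \<le> n \<and> n < 43" | "43 \<le> n \<and> n < 83" | "83 \<le> n \<and> n < 163"
      | "163 \<le> n \<and> n < 317" | "317 \<le> n \<and> n < 631" | "631 \<le> n \<and> n < 1259"
      using assms(2) by linarith
    thus ?thesis
    proof cases
      case 1 thus ?thesis using step[OF p2, of 1] assms by simp
    next case 2 thus ?thesis using step[OF p3, of 2] by simp
    next case 3 thus ?thesis using step[OF p5, of 3] by simp
    next case 4 thus ?thesis using step[OF p7, of 5] by simp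
    next case 5 thus ?thesis using step[OF p13, of 7] by simp
    next case 6 thus ?thesis using step[OF p23, of 13] by simp
    next case 7 thus ?thesis using step[OF p43, of 23] by simp
    next case 8 thus ?thesis using step[OF p83, of 43] by simp
    next case 9 thus ?thesis using step[OF p163, of 83] by simp
    next case 10 thus ?thesis using step[OF p317, of 163] by simp
    next case 11 thus ?thesis using step[OF p631, of 317] by simp
    next case 12 thus ?thesis using step[OF p1259, of 631] by simp
    qed
  qed
qed



lemma pow_bound: "6 \<le> j \<Longrightarrow> 8*j + 8 \<le> (2::nat)^j"
proof (induction j rule: nat_induct_at_least)
  case base thus ?case by simp
next
  case (Suc j) thus ?case by simp
qed

lemma s_bound:
  fixes s :: nat
  assumes "48 \<le> s" shows "s + 1 \<le> 2^(s div 8)"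
proof -
  have "6 \<le> s div 8" using assms by simp
  hence "8 * (s div 8) + 8 \<le> 2^(s div 8)" by (rule pow_bound)
  moreover have "s < 8 * (s div 8) + 8" by simp
  ultimately show ?thesis by linarith
qed

lemma prod_subset_le:
  fixes f :: "'a \<Rightarrow> nat"
  assumes "finite T" "B \<subseteq> T" "\<And>x. x \<in> T \<Longrightarrow> 1 \<le> f x"
  shows "prod f B \<le> prod f T"
proof -
  have "prod f T = prod f (T - B) * prod f B" by (rule prod.subset_diff[OF assms(2,1)])
  moreover have "1 \<le> prod f (T - B)" using assms(3) by (intro prod_ge_1) auto
  ultimately show ?thesis by simp
qed

lemma bertrand_large:
  fixes n :: nat
  assumes n: "1152 \<le> n"
  shows "\<exists>p. prime p \<and> n < p \<and> p \<le> 2*n"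
proof (rule ccontr)
  assume no: "\<not> (\<exists>p. prime p \<and> n < p \<and> p \<le> 2*n)"
  define x where "x = 2*n"
  define s where "s = floor_sqrt x"
  have s2: "s^2 \<le> x" unfolding s_def by (rule floor_sqrt_power2_le)
  have s3: "x < (s+1)^2" unfolding s_def using Suc_floor_sqrt_power2_gt[of x] by simp
  have "floor_sqrt (48^2) \<le> s" unfolding s_def by (rule mono_floor_sqrt') (use n in \<open>simp add: x_def\<close>)
  hence s48: "48 \<le> s" by (simp only: floor_sqrt_inverse_power2)
  have x1: "1 \<le> x" using n by (simp add: x_def)
  define C where "C = x choose n"
  have C0: "C > 0" unfolding C_def x_def by simp
  define v where "v p = multiplicity p C" for p
  define PF where "PF = prime_factors C"
  have finPF: "finite PF" unfolding PF_def by simp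
  have Cprod: "C = (\<Prod>p\<in>PF. p ^ v p)" using prime_factorization_nat[OF C0] unfolding PF_def v_def .
  have PFp: "prime p" "p dvd C" if "p \<in> PF" for p
    using that C0 unfolding PF_def by (auto simp: in_prime_factors_iff)
  have vpos: "1 \<le> v p" if "p \<in> PF" for p
  proof -
    have nu: "\<not> is_unit p" using prime_gt_1_nat[OF PFp(1)[OF that]] by simp
    have "p ^ 1 dvd C" using PFp(2)[OF that] by simp
    thus ?thesis unfolding v_def using power_dvd_iff_le_multiplicity[OF _ nu, of C 1] C0 by simp
  qed
  have vle: "p ^ v p \<le> x" if "p \<in> PF" for p
    unfolding v_def C_def x_def using binom_pow_le[OF PFp(1)[OF that], of n] n by simp
  have Cfact: "C * (fact n * fact n) = fact x"
    using binomial_fact_lemma[of n x] unfolding C_def x_def by (simp add: ac_simps)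
  define A where "A = {p\<in>PF. p \<le> s}"
  define B where "B = {p\<in>PF. s < p}"
  have PFAB: "PF = A \<union> B" unfolding A_def B_def by auto
  have finA: "finite A" and finB: "finite B" using finPF unfolding A_def B_def by auto
  have disj: "A \<inter> B = {}" unfolding A_def B_def by auto
  have PA: "(\<Prod>p\<in>A. p ^ v p) \<le> x ^ s"
  proof -
    have "(\<Prod>p\<in>A. p ^ v p) \<le> (\<Prod>p\<in>A. x)"
      by (rule prod_mono) (auto simp: A_def vle)
    also have "\<dots> = x ^ card A" by simp
    also have "card A \<le> s"
    proof -
      have "A \<subseteq> {1..s}" unfolding A_def using PFp(1) prime_ge_1_nat by auto
      thus ?thesis using card_mono[of "{1..s}" A] by simp
    qed
    hence "x ^ card A \<le> x ^ s" using x1 by (intro power_increasing) auto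
    finally show ?thesis .
  qed
  define Q where "Q = {p::nat. prime p \<and> p \<le> x div 3}"
  have BQ: "B \<subseteq> Q"
  proof
    fix p assume pB: "p \<in> B"
    hence pPF: "p \<in> PF" and sp: "s < p" unfolding B_def by auto
    have pp: "prime p" using PFp(1)[OF pPF] .
    have "p dvd fact x" using PFp(2)[OF pPF] Cfact by (metis dvd_mult2)
    hence px: "p \<le> x" by (simp add: prime_dvd_fact_iff[OF pp])
    have pn: "p \<le> n" using no pp px unfolding x_def by (meson not_le)
    have "(s+1)^2 \<le> p^2" using sp by (intro power_mono) auto
    hence sq: "2*n < p^2" using s3 unfolding x_def by linarith
    have "3*p \<le> x"
    proof (rule ccontr)
      assume "\<not> 3*p \<le> x"
      hence "2*n < 3*p" unfolding x_def by simp
      hence "multiplicity p ((2*n) choose n) = 0" by (rule binom_no_big[OF pp pn _ sq])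
      thus False using vpos[OF pPF] unfolding v_def C_def x_def by simp
    qed
    hence "p \<le> x div 3" by linarith
    thus "p \<in> Q" unfolding Q_def using pp by simp
  qed
  have PB: "(\<Prod>p\<in>B. p ^ v p) \<le> 4 ^ (x div 3)"
  proof -
    have "(\<Prod>p\<in>B. p ^ v p) \<le> (\<Prod>p\<in>B. p)"
    proof (rule prod_mono)
      fix p assume pB: "p \<in> B"
      hence pPF: "p \<in> PF" and sp: "s < p" unfolding B_def by auto
      have p1: "1 < p" using prime_gt_1_nat[OF PFp(1)[OF pPF]] .
      have "(s+1)^2 \<le> p^2" using sp by (intro power_mono) auto
      hence "p ^ v p < p ^ 2" using vle[OF pPF] s3 by linarith
      hence "v p < 2" by (rule power_less_imp_less_exp[OF p1])
      hence "p ^ v p \<le> p ^ 1" using p1 by (intro power_increasing) auto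
      thus "0 \<le> p ^ v p \<and> p ^ v p \<le> p" by simp
    qed
    also have "\<dots> \<le> \<Prod>Q"
      by (rule prod_subset_le[OF _ BQ]) (auto simp: Q_def dest: prime_gt_0_nat)
    also have "\<dots> \<le> 4 ^ (x div 3)" unfolding Q_def by (rule primorial)
    finally show ?thesis .
  qed
  have Cle: "C \<le> x ^ s * 4 ^ (x div 3)"
  proof -
    have "C = (\<Prod>p\<in>A. p ^ v p) * (\<Prod>p\<in>B. p ^ v p)"
      using Cprod unfolding PFAB by (simp add: prod.union_disjoint[OF finA finB disj])
    also have "\<dots> \<le> x ^ s * 4 ^ (x div 3)" by (rule mult_mono[OF PA PB]) auto
    finally show ?thesis .
  qed
  have "4 ^ n / (2 * real n) \<le> real C" unfolding C_def x_def
    by (rule central_binomial_lower_bound) (use n in simp)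
  hence "real (4 ^ n) \<le> real x * real C" unfolding x_def using n by (simp add: field_simps)
  hence c1: "4 ^ n \<le> x * C" by (simp only: of_nat_mult[symmetric] of_nat_le_iff)
  define y where "y = s div 8"
  have "x ^ (s+1) \<le> ((s+1)^2) ^ (s+1)" using s3 by (intro power_mono) auto
  also have "\<dots> = (s+1) ^ (2*(s+1))" by (rule power_mult[symmetric])
  also have "\<dots> \<le> (2^y) ^ (2*(s+1))" unfolding y_def using s_bound[OF s48] by (intro power_mono) auto
  also have "\<dots> = 2 ^ (y * (2*(s+1)))" by (rule power_mult[symmetric])
  also have "y * (2*(s+1)) = 2 * (y*(s+1))" by simp
  also have "(2::nat) ^ (2 * (y*(s+1))) = 4 ^ (y*(s+1))" by (subst power_mult) simp
  finally have c2: "x ^ (s+1) \<le> 4 ^ (y*(s+1))" .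
  have "(4::nat) ^ n \<le> x * (x ^ s * 4 ^ (x div 3))" using c1 Cle
    by (meson le_trans mult_le_mono2)
  also have "\<dots> = x ^ (s+1) * 4 ^ (x div 3)" by simp
  also have "\<dots> \<le> 4 ^ (y*(s+1)) * 4 ^ (x div 3)" using c2 by simp
  also have "\<dots> = 4 ^ (y*(s+1) + x div 3)" by (simp add: power_add)
  finally have "(4::nat) ^ n \<le> 4 ^ (y*(s+1) + x div 3)" .
  hence h1: "n \<le> y*(s+1) + x div 3" by (rule power_le_imp_le_exp[rotated]) simp
  have h2: "3 * (x div 3) \<le> x" by simp
  have h4: "8*y \<le> s" unfolding y_def by simp
  have h4': "8*y*(s+1) \<le> s*(s+1)" using h4 by (rule mult_right_mono) simp
  have h5: "s*s \<le> x" using s2 by (simp add: power2_eq_square)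
  have h6: "48*s \<le> s*s" using s48 by (rule mult_right_mono) simp
  have h1': "n \<le> y*s + y + x div 3" using h1 by (simp add: algebra_simps)
  have h4'': "8*(y*s) + 8*y \<le> s*s + s" using h4' by (simp add: algebra_simps)
  have xn: "x = 2*n" by (rule x_def)
  show False using h1' h2 h4'' h5 h6 s48 xn by linarith
qed

lemma bertrand:
  fixes n :: nat
  assumes "1 \<le> n"
  shows "\<exists>p. prime p \<and> n < p \<and> p \<le> 2*n"
proof (cases "n < 1259")
  case True thus ?thesis using bertrand_small assms by blast
next
  case False thus ?thesis using bertrand_large by simp
qed

lemma fact_nsq_aux:
  fixes n k c p :: nat
  assumes pp: "prime p" and pn: "p \<le> n" and np: "n < 2*p" and c: "\<not> p dvd c"
    and e: "fact n = c * k^2"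
  shows False
proof -
  define R where "R = \<Prod>({1..n} - {p})"
  have p1: "1 \<le> p" using prime_ge_1_nat[OF pp] .
  have "fact n = (\<Prod>{1..n}::nat)" by (simp only: fact_prod of_nat_id)
  also have "\<dots> = p * R" unfolding R_def using p1 pn by (intro prod.remove) auto
  finally have fR: "fact n = p * R" .
  have nR: "\<not> p dvd R"
  proof
    assume "p dvd R"
    hence "\<exists>i\<in>{1..n} - {p}. p dvd i"
      unfolding R_def using prime_dvd_prod_iff[of "{1..n} - {p}" p "\<lambda>x. x"] pp by simp
    then obtain i where i: "i \<in> {1..n} - {p}" "p dvd i" by blast
    then obtain j where j: "i = p * j" by (auto simp: dvd_def)
    show False
    proof (cases "j \<le> 1")
      case True
      hence "j = 0 \<or> j = 1" by auto
      thus False using i j by auto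
    next
      case False
      hence pj: "p * 2 \<le> p * j" by (intro mult_le_mono2) simp
      have "i \<le> n" using i by simp
      thus False using pj j np by linarith
    qed
  qed
  have "p dvd c * k^2" using e fR by (metis dvd_triv_left)
  hence "p dvd k^2" using c pp by (simp add: prime_dvd_mult_iff)
  hence "p dvd k" using pp prime_dvd_power by blast
  then obtain j where j: "k = p * j" by (auto simp: dvd_def)
  have "p * R = p * (c * p * j^2)" using e fR j by (simp add: power2_eq_square ac_simps)
  hence "R = c * p * j^2" using p1 by simp
  hence "p dvd R" by simp
  thus False using nR by simp
qed

lemma fact_nsq:
  fixes n k :: nat
  assumes n: "3 \<le> n"
  shows "fact n \<noteq> k^2" "fact n \<noteq> 2*k^2"
proof -
  have "2 div 2 \<le> n div 2" using n by (intro div_le_mono) simp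
  hence "1 \<le> n div 2" by simp
  then obtain p where pp: "prime p" and p1: "n div 2 < p" and p2: "p \<le> 2*(n div 2)"
    using bertrand[of "n div 2"] by auto
  have pn: "p \<le> n" using p2 by linarith
  have np: "n < 2*p" using p1 by linarith
  have p_gt1: "1 < p" using prime_gt_1_nat[OF pp] .
  show "fact n \<noteq> k^2"
  proof
    assume "fact n = k^2"
    hence "fact n = 1 * k^2" by simp
    moreover have "\<not> p dvd 1" using p_gt1 by simp
    ultimately show False using fact_nsq_aux[OF pp pn np] by blast
  qed
  show "fact n \<noteq> 2*k^2"
  proof
    assume e: "fact n = 2*k^2"
    show False
    proof (cases "p = 2")
      case True
      hence "n = 3" using p1 n by linarith
      hence "k^2 = 3" using e by (simp add: fact_numeral)
      moreover have "k^2 \<noteq> 3"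
      proof (cases "k \<le> 1")
        case True
        hence "k^2 \<le> 1^2" by (intro power_mono) auto
        thus ?thesis by simp
      next
        case False
        hence "2^2 \<le> k^2" by (intro power_mono) auto
        thus ?thesis by simp
      qed
      ultimately show False by simp
    next
      case False
      have "\<not> p dvd 2"
      proof
        assume "p dvd 2"
        hence "p \<le> 2" by (rule dvd_imp_le) simp
        thus False using False p_gt1 by simp
      qed
      thus False using fact_nsq_aux[OF pp pn np _ e] by blast
    qed
  qed
qed

theorem corollary10p4:
  fixes n :: nat
  assumes "n \<ge> 3"
  shows "(\<forall>C t. oriented_cayley (sym_group n) C \<longrightarrow> \<not> uniform_mixing (sym_group n) C t) \<and>
         (\<forall>C t. oriented_cayley (alt_group n) C \<longrightarrow> \<not> uniform_mixing (alt_group n) C t)"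
proof (intro conjI allI impI notI)
  fix C t
  assume oc: "oriented_cayley (sym_group n) C" and um: "uniform_mixing (sym_group n) C t"
  have cs: "card (carrier (sym_group n)) = fact n" by (rule sym_group_card_carrier)
  have fin: "finite (carrier (sym_group n))"
    using cs by (metis card.infinite fact_nonzero)
  obtain k where "card (carrier (sym_group n)) = k^2"
    using mixing_square[OF sym_group_is_group fin oc um] by blast
  thus False using cs fact_nsq(1)[OF assms] by simp
next
  fix C t
  assume oc: "oriented_cayley (alt_group n) C" and um: "uniform_mixing (alt_group n) C t"
  have cs: "2 * card (carrier (alt_group n)) = fact n" by (rule alt_group_card_carrier) (use assms in simp)
  have fin: "finite (carrier (alt_group n))"
    using cs by (metis card.infinite fact_nonzero mult_0_right)
  obtain k where "card (carrier (alt_group n)) = k^2"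
    using mixing_square[OF alt_group_is_group fin oc um] by blast
  thus False using cs fact_nsq(2)[OF assms] by metis
qed

end
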